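(* Fix constants $\gamma\in(0,1]$ and $K\ge1$. Let $L\ge 1$ and $d_0,\dots,d_L$ be positive integers with $\max_i d_i\le KL^{1-\gamma}$. Let $W_1,\dots,W_L$ be independent random matrices, $W_i\in\mathbb{R}^{d_i\times d_{i-1}}$ with i.i.d. $\mathcal N(0,\sigma_i^2)$ entries ($\sigma_i>0$), and set $A_i=W_i/(\sqrt{d_i}\sigma_i)$ and $A_{j:i}=A_jA_{j-1}\cdots A_i$ for $1\le i\le j\le L$. Then there is a constant $C$ depending only on $K$ such that for every $\delta\in(0,1)$, with probability at least $1-\delta$, $\|A_{j:i}\|\le C L^3/\delta$ for all $1\le i\le j\le L$.
   Context: $\|\cdot\|$ denotes the spectral norm. *)

theory Defs
  imports "HOL-Probability.Probability"
begin

text \<open>Matrices are represented as functions nat => nat => real together with explicit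
  dimensions; only entries with row index < number of rows and column index < number
  of columns are meaningful.\<close>

definition mat_mult :: "nat \<Rightarrow> (nat \<Rightarrow> nat \<Rightarrow> real) \<Rightarrow> (nat \<Rightarrow> nat \<Rightarrow> real) \<Rightarrow> (nat \<Rightarrow> nat \<Rightarrow> real)" where
  "mat_mult n X Y = (\<lambda>r c. \<Sum>k<n. X r k * Y k c)"

definition spec_norm :: "nat \<Rightarrow> nat \<Rightarrow> (nat \<Rightarrow> nat \<Rightarrow> real) \<Rightarrow> real" where
  "spec_norm m n X = Sup {sqrt (\<Sum>r<m. (\<Sum>c<n. X r c * x c)^2) | x. (\<Sum>c<n. (x c)^2) \<le> 1}"

text \<open>chain A d i k = A_{i+k} A_{i+k-1} ... A_i  (i.e. A_{j:i} with j = i + k),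
  where A_l is a d l x d (l-1) matrix.\<close>
fun mat_chain :: "(nat \<Rightarrow> nat \<Rightarrow> nat \<Rightarrow> real) \<Rightarrow> (nat \<Rightarrow> nat) \<Rightarrow> nat \<Rightarrow> nat \<Rightarrow> (nat \<Rightarrow> nat \<Rightarrow> real)" where
  "mat_chain A d i 0 = A i"
| "mat_chain A d i (Suc k) = mat_mult (d (i + k)) (A (i + Suc k)) (mat_chain A d i k)"

definition mat_prod :: "(nat \<Rightarrow> nat \<Rightarrow> nat \<Rightarrow> real) \<Rightarrow> (nat \<Rightarrow> nat) \<Rightarrow> nat \<Rightarrow> nat \<Rightarrow> (nat \<Rightarrow> nat \<Rightarrow> real)" where
  "mat_prod A d j i = mat_chain A d i (j - i)"

definition entry_idx :: "nat \<Rightarrow> (nat \<Rightarrow> nat) \<Rightarrow> (nat \<times> nat \<times> nat) set" where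
  "entry_idx L d = {(l, r, c). 1 \<le> l \<and> l \<le> L \<and> r < d l \<and> c < d (l - 1)}"

definition gauss_model :: "nat \<Rightarrow> (nat \<Rightarrow> nat) \<Rightarrow> (nat \<Rightarrow> real) \<Rightarrow> (nat \<times> nat \<times> nat \<Rightarrow> real) measure" where
  "gauss_model L d \<sigma> = (\<Pi>\<^sub>M e\<in>entry_idx L d. density lborel (normal_density 0 (\<sigma> (fst e))))"

definition norm_mats :: "(nat \<Rightarrow> nat) \<Rightarrow> (nat \<Rightarrow> real) \<Rightarrow> (nat \<times> nat \<times> nat \<Rightarrow> real) \<Rightarrow> nat \<Rightarrow> nat \<Rightarrow> nat \<Rightarrow> real" where
  "norm_mats d \<sigma> w = (\<lambda>l r c. w (l, r, c) / (sqrt (real (d l)) * \<sigma> l))"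

end

theory Submission
  imports Defs
begin


lemma finite_entry_idx: "finite (entry_idx L d)"
proof -
  have "entry_idx L d \<subseteq> Sigma {..L} (\<lambda>l. {..<d l} \<times> {..<d (l-1)})"
    unfolding entry_idx_def by auto
  then show ?thesis by (rule finite_subset) (intro finite_SigmaI finite_cartesian_product; simp)
qed

definition Qf :: "nat \<Rightarrow> nat \<Rightarrow> (nat \<Rightarrow> nat \<Rightarrow> real) \<Rightarrow> (nat \<Rightarrow> real) \<Rightarrow> real" where
  "Qf m n X x = (\<Sum>r<m. (\<Sum>c<n. X r c * x c)^2)"
definition nxf :: "nat \<Rightarrow> (nat \<Rightarrow> real) \<Rightarrow> real" where "nxf n x = (\<Sum>c<n. (x c)^2)"
definition frob :: "nat \<Rightarrow> nat \<Rightarrow> (nat \<Rightarrow> nat \<Rightarrow> real) \<Rightarrow> real" where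
  "frob m n X = (\<Sum>r<m. \<Sum>c<n. (X r c)^2)"

lemma Q_le_frob: "Qf m n X x \<le> frob m n X * nxf n x"
proof -
  have "Qf m n X x \<le> (\<Sum>r<m. (\<Sum>c<n. (X r c)^2) * nxf n x)"
    unfolding Qf_def nxf_def by (intro sum_mono Cauchy_Schwarz_ineq_sum)
  also have "\<dots> = frob m n X * nxf n x" unfolding frob_def by (simp add: sum_distrib_right)
  finally show ?thesis .
qed

lemma frob_nonneg: "frob m n X \<ge> 0" unfolding frob_def by (intro sum_nonneg) auto
lemma nxf_nonneg: "nxf n x \<ge> 0" unfolding nxf_def by (intro sum_nonneg) auto
lemma Qf_nonneg: "Qf m n X x \<ge> 0" unfolding Qf_def by (intro sum_nonneg) auto

lemma spec_set_ne:
  fixes m n :: nat and X :: "nat \<Rightarrow> nat \<Rightarrow> real"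
  shows "{sqrt (\<Sum>r<m. (\<Sum>c<n. X r c * x c)^2) | x. (\<Sum>c<n. (x c)^2) \<le> 1} \<noteq> {}"
  by (rule ccontr) (auto dest: spec[of _ "\<lambda>_. 0"])

lemma spec_set_bdd:
  fixes m n :: nat and X :: "nat \<Rightarrow> nat \<Rightarrow> real"
  shows "bdd_above {sqrt (\<Sum>r<m. (\<Sum>c<n. X r c * x c)^2) | x. (\<Sum>c<n. (x c)^2) \<le> 1}"
proof (rule bdd_aboveI)
  fix y assume "y \<in> {sqrt (\<Sum>r<m. (\<Sum>c<n. X r c * x c)^2) | x. (\<Sum>c<n. (x c)^2) \<le> 1}"
  then obtain x where y: "y = sqrt (Qf m n X x)" and x: "nxf n x \<le> 1" unfolding Qf_def nxf_def by auto
  have "Qf m n X x \<le> frob m n X * nxf n x" by (rule Q_le_frob)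
  also have "\<dots> \<le> frob m n X" using x frob_nonneg nxf_nonneg by (simp add: mult_left_le)
  finally show "y \<le> sqrt (frob m n X)" unfolding y by simp
qed

lemma spec_le_frob: "spec_norm m n X \<le> sqrt (frob m n X)"
  unfolding spec_norm_def
proof (rule cSup_least[OF spec_set_ne])
  fix y assume "y \<in> {sqrt (\<Sum>r<m. (\<Sum>c<n. X r c * x c)^2) | x. (\<Sum>c<n. (x c)^2) \<le> 1}"
  then obtain x where y: "y = sqrt (Qf m n X x)" and x: "nxf n x \<le> 1" unfolding Qf_def nxf_def by auto
  have "Qf m n X x \<le> frob m n X * nxf n x" by (rule Q_le_frob)
  also have "\<dots> \<le> frob m n X" using x frob_nonneg nxf_nonneg by (simp add: mult_left_le)
  finally show "y \<le> sqrt (frob m n X)" unfolding y by simp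
qed

lemma spec_char:
  assumes B: "B \<ge> 0"
  shows "spec_norm m n X \<le> B \<longleftrightarrow> (\<forall>x. Qf m n X x \<le> B^2 * nxf n x)"
proof
  assume H: "\<forall>x. Qf m n X x \<le> B^2 * nxf n x"
  show "spec_norm m n X \<le> B"
    unfolding spec_norm_def
  proof (rule cSup_least[OF spec_set_ne])
    fix y assume "y \<in> {sqrt (\<Sum>r<m. (\<Sum>c<n. X r c * x c)^2) | x. (\<Sum>c<n. (x c)^2) \<le> 1}"
    then obtain x where y: "y = sqrt (Qf m n X x)" and x: "nxf n x \<le> 1" unfolding Qf_def nxf_def by auto
    have "Qf m n X x \<le> B^2 * nxf n x" using H by blast
    also have "\<dots> \<le> B^2" using x by (simp add: mult_left_le)
    finally have "Qf m n X x \<le> B^2" .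
    then have "sqrt (Qf m n X x) \<le> sqrt (B^2)" by (rule real_sqrt_le_mono)
    then show "y \<le> B" unfolding y using B by simp
  qed
next
  assume S: "spec_norm m n X \<le> B"
  show "\<forall>x. Qf m n X x \<le> B^2 * nxf n x"
  proof
    fix x
    show "Qf m n X x \<le> B^2 * nxf n x"
    proof (cases "nxf n x = 0")
      case True
      then have "\<forall>c\<in>{..<n}. (x c)^2 = 0" unfolding nxf_def by (subst sum_nonneg_eq_0_iff[symmetric]) auto
      then have "Qf m n X x = 0" unfolding Qf_def by simp
      then show ?thesis using True by simp
    next
      case False
      define s where "s = sqrt (nxf n x)"
      have s: "s > 0" using False nxf_nonneg[of n x] unfolding s_def by simp
      have s2: "s^2 = nxf n x" unfolding s_def using nxf_nonneg by simp
      define y where "y c = x c / s" for c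
      have ny: "nxf n y = 1"
        unfolding y_def nxf_def power_divide sum_divide_distrib[symmetric] using s2 s False unfolding nxf_def by simp
      have Qy: "Qf m n X y = Qf m n X x / s^2"
      proof -
        have "(\<Sum>c<n. X r c * y c)^2 = (\<Sum>c<n. X r c * x c)^2 / s^2" for r
          unfolding y_def by (simp add: sum_divide_distrib[symmetric] power_divide)
        then show ?thesis unfolding Qf_def by (simp add: sum_divide_distrib)
      qed
      have "sqrt (Qf m n X y) \<in> {sqrt (\<Sum>r<m. (\<Sum>c<n. X r c * x c)^2) | x. (\<Sum>c<n. (x c)^2) \<le> 1}"
        using ny unfolding Qf_def nxf_def by auto
      then have "sqrt (Qf m n X y) \<le> spec_norm m n X"
        unfolding spec_norm_def by (rule cSup_upper[OF _ spec_set_bdd])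
      then have "sqrt (Qf m n X y) \<le> B" using S by simp
      then have "(sqrt (Qf m n X y))^2 \<le> B^2" by (rule power_mono) (simp add: Qf_nonneg)
      then have "Qf m n X y \<le> B^2" using Qf_nonneg[of m n X y] by simp
      then have "Qf m n X x / s^2 \<le> B^2" using Qy by simp
      then show ?thesis using s s2 nxf_nonneg[of n x] False by (simp add: divide_le_eq)
    qed
  qed
qed

lemma rat_dense_char:
  fixes m n :: nat and X :: "nat \<Rightarrow> nat \<Rightarrow> real"
  shows
  "(\<forall>x::nat\<Rightarrow>real. Qf m n X x \<le> B * nxf n x) \<longleftrightarrow>
   (\<forall>xs::rat list. Qf m n X (\<lambda>c. of_rat (xs ! c)) \<le> B * nxf n (\<lambda>c. of_rat (xs ! c)))"
proof
  assume H: "\<forall>xs::rat list. Qf m n X (\<lambda>c. of_rat (xs ! c)) \<le> B * nxf n (\<lambda>c. of_rat (xs ! c))"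
  have cong: "Qf m n X x = Qf m n X x'" "nxf n x = nxf n x'" if "\<And>c. c < n \<Longrightarrow> x c = x' c" for x x'
    unfolding Qf_def nxf_def using that by (auto intro!: sum.cong)
  have base: "Qf m n X x \<le> B * nxf n x" if "\<And>c. c < n \<Longrightarrow> x c \<in> \<rat>" for x
  proof -
    define xs where "xs = map (\<lambda>c. SOME q. x c = of_rat q) [0..<n]"
    have "x c = of_rat (xs ! c)" if "c < n" for c
    proof -
      obtain q where "x c = of_rat q" using \<open>c < n\<close> \<open>\<And>c. c < n \<Longrightarrow> x c \<in> \<rat>\<close> Rats_cases by metis
      then have "x c = of_rat (SOME q. x c = of_rat q)" by (rule someI)
      then show ?thesis unfolding xs_def using that by simp
    qed
    then show ?thesis using H cong[of x "\<lambda>c. of_rat (xs ! c)"] by metis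
  qed
  have claim: "\<forall>x::nat\<Rightarrow>real. (\<forall>c. k \<le> c \<longrightarrow> c < n \<longrightarrow> x c \<in> \<rat>) \<longrightarrow> Qf m n X x \<le> B * nxf n x" for k
  proof (induction k)
    case 0
    then show ?case using base by auto
  next
    case (Suc k)
    show ?case
    proof (intro allI impI)
      fix x :: "nat \<Rightarrow> real" assume xr: "\<forall>c. Suc k \<le> c \<longrightarrow> c < n \<longrightarrow> x c \<in> \<rat>"
      define xt :: "real \<Rightarrow> nat \<Rightarrow> real" where "xt t c = (if c = k then 1 else 0) * t + (if c = k then 0 else x c)" for t c
      define \<phi> where "\<phi> t = (\<Sum>r<m. (\<Sum>c<n. X r c * xt t c)^2) - B * (\<Sum>c<n. (xt t c)^2)" for t
      have \<phi>eq: "\<phi> t = Qf m n X (xt t) - B * nxf n (xt t)" for t unfolding \<phi>_def Qf_def nxf_def by simp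
      have cont: "continuous_on UNIV \<phi>" unfolding \<phi>_def xt_def by (intro continuous_intros)
      have "\<phi> t \<le> 0" if "t \<in> \<rat>" for t
      proof -
        have "\<forall>c. k \<le> c \<longrightarrow> c < n \<longrightarrow> xt t c \<in> \<rat>"
          using xr that unfolding xt_def by (auto simp: le_Suc_eq)
        then have "Qf m n X (xt t) \<le> B * nxf n (xt t)" using Suc.IH by blast
        then show ?thesis unfolding \<phi>eq by simp
      qed
      then have "\<phi> (x k) \<le> 0"
        using continuous_le_on_closure[of \<rat> \<phi> "x k" 0] cont Rats_closure_real by auto
      moreover have "xt (x k) = x" unfolding xt_def by auto
      ultimately show "Qf m n X x \<le> B * nxf n x" using \<phi>eq[of "x k"] by simp
    qed
  qed
  show "\<forall>x. Qf m n X x \<le> B * nxf n x" using claim[of n] by auto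
qed auto


lemma gauss_int:
  fixes s :: real assumes s: "s > 0"
  shows "integrable (density lborel (normal_density 0 s)) (\<lambda>x. x)"
    "integrable (density lborel (normal_density 0 s)) (\<lambda>x. x * x)"
    "integrable (density lborel (normal_density 0 s)) (\<lambda>x. 1::real)"
    "integral\<^sup>L (density lborel (normal_density 0 s)) (\<lambda>x. x) = 0"
    "integral\<^sup>L (density lborel (normal_density 0 s)) (\<lambda>x. x * x) = s^2"
    "integral\<^sup>L (density lborel (normal_density 0 s)) (\<lambda>x. 1::real) = 1"
proof -
  have P: "prob_space (density lborel (normal_density 0 s))"
    using prob_space_normal_density s by blast
  have i: "integrable lborel (\<lambda>x. normal_density 0 s x * (x - 0)^k)" for k
    by (rule integrable_normal_moment[OF s])
  show "integrable (density lborel (normal_density 0 s)) (\<lambda>x. x)"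
    using i[of 1] by (subst integrable_density) auto
  show "integrable (density lborel (normal_density 0 s)) (\<lambda>x. x * x)"
    using i[of 2] by (subst integrable_density) (auto simp: power2_eq_square)
  show "integrable (density lborel (normal_density 0 s)) (\<lambda>x. 1::real)"
    using P unfolding prob_space_def by (simp add: finite_measure.integrable_const)
  have m2: "integral\<^sup>L lborel (\<lambda>x. normal_density 0 s x * (x - 0)^(2*1)) = s^2"
    using integral_normal_moment_even[OF s, of 0 1] by (simp add: power2_eq_square)
  have m1: "integral\<^sup>L lborel (\<lambda>x. normal_density 0 s x * x) = 0"
    using integral_normal_moment_nz_1[OF s, of 0] by simp
  show "integral\<^sup>L (density lborel (normal_density 0 s)) (\<lambda>x. x) = 0"
    using m1 by (subst integral_density) auto
  show "integral\<^sup>L (density lborel (normal_density 0 s)) (\<lambda>x. x * x) = s^2"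
    using m2 by (subst integral_density) (auto simp: power2_eq_square)
  show "integral\<^sup>L (density lborel (normal_density 0 s)) (\<lambda>x. 1::real) = 1"
    using prob_space.prob_space[OF P] by simp
qed

locale gsetup =
  fixes L :: nat and d :: "nat \<Rightarrow> nat" and \<sigma> :: "nat \<Rightarrow> real"
  assumes \<sigma>pos: "\<And>l. 1 \<le> l \<Longrightarrow> l \<le> L \<Longrightarrow> \<sigma> l > 0"
  and dpos: "\<And>l. l \<le> L \<Longrightarrow> d l > 0"
begin

definition "EI = entry_idx L d"
definition "MM e = (if e \<in> EI then density lborel (normal_density 0 (\<sigma> (fst e))) else density lborel (normal_density 0 1))"

lemma MM_sigma: "\<And>e. e \<in> EI \<Longrightarrow> \<sigma> (fst e) > 0"
  unfolding EI_def entry_idx_def using \<sigma>pos by auto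

lemma MM_in: "e \<in> EI \<Longrightarrow> MM e = density lborel (normal_density 0 (\<sigma> (fst e)))"
  unfolding MM_def by simp

lemma MM_prob: "prob_space (MM e)"
proof (cases "e \<in> EI")
  case True
  then show ?thesis unfolding MM_def using prob_space_normal_density[OF MM_sigma[OF True]] by simp
next
  case False
  then show ?thesis unfolding MM_def using prob_space_normal_density[of 1] by simp
qed

sublocale product_sigma_finite MM
  unfolding product_sigma_finite_def using MM_prob prob_space_imp_sigma_finite by blast

lemma sets_MM[simp]: "sets (MM e) = sets borel"
  unfolding MM_def by simp

lemma finite_EI[simp]: "finite EI" unfolding EI_def by (rule finite_entry_idx)

lemma gm: "gauss_model L d \<sigma> = PiM EI MM"
  unfolding gauss_model_def MM_def EI_def by (intro PiM_cong) auto

lemma comp_meas[measurable]: "(\<lambda>w. w j) \<in> borel_measurable (PiM J MM)"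
proof (cases "j \<in> J")
  case True
  then have "(\<lambda>w. w j) \<in> measurable (PiM J MM) (MM j)" by measurable
  then show ?thesis using measurable_cong_sets[OF refl sets_MM] by blast
next
  case False
  have "(\<lambda>w. undefined) \<in> borel_measurable (PiM J MM)" by simp
  then show ?thesis
    by (rule measurable_cong[THEN iffD1, rotated]) (metis False PiE_arb space_PiM)
qed

lemma moment:
  assumes J: "J \<subseteq> EI" and e: "e \<in> J" and e': "e' \<in> J"
  shows "integrable (PiM J MM) (\<lambda>x. x e * x e')"
    "integral\<^sup>L (PiM J MM) (\<lambda>x. x e * x e') = (if e = e' then (\<sigma> (fst e))^2 else 0)"
proof -
  have fJ: "finite J" by (rule finite_subset[OF J finite_EI])
  define f :: "nat \<times> nat \<times> nat \<Rightarrow> real \<Rightarrow> real" where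
    "f i = (if i = e \<and> i = e' then (\<lambda>x. x * x) else if i = e \<or> i = e' then (\<lambda>x. x) else (\<lambda>x. 1))" for i
  have MMi: "MM i = density lborel (normal_density 0 (\<sigma> (fst i)))" and s: "\<sigma> (fst i) > 0"
    if "i \<in> J" for i using that J by (auto intro!: MM_in MM_sigma)
  have int: "integrable (MM i) (f i)" if "i \<in> J" for i
    unfolding f_def MMi[OF that] using gauss_int(1-3)[OF s[OF that]] by auto
  have ival: "integral\<^sup>L (MM i) (f i) = (if i = e \<and> i = e' then (\<sigma> (fst i))^2 else if i = e \<or> i = e' then 0 else 1)"
    if "i \<in> J" for i
    unfolding f_def MMi[OF that] using gauss_int(4-6)[OF s[OF that]] by auto
  have prodeq: "(\<Prod>i\<in>J. f i (x i)) = x e * x e'" for x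
  proof (cases "e = e'")
    case True
    have "f i (x i) = (if i = e then x i * x i else 1)" for i
      using True by (simp add: f_def)
    then have "(\<Prod>i\<in>J. f i (x i)) = (\<Prod>i\<in>J. if i = e then x i * x i else 1)"
      by simp
    also have "\<dots> = x e * x e" using fJ e by (simp add: prod.delta)
    finally show ?thesis using True by simp
  next
    case False
    have "f i (x i) = (if i = e then x i else 1) * (if i = e' then x i else 1)" for i
      using False by (simp add: f_def)
    then have "(\<Prod>i\<in>J. f i (x i)) = (\<Prod>i\<in>J. (if i = e then x i else 1) * (if i = e' then x i else 1))"
      by simp
    then show ?thesis using fJ e e' False by (simp add: prod.distrib)
  qed
  show "integrable (PiM J MM) (\<lambda>x. x e * x e')"
    using product_integrable_prod[OF fJ int] unfolding prodeq .
  have "integral\<^sup>L (PiM J MM) (\<lambda>x. x e * x e') = (\<Prod>i\<in>J. integral\<^sup>L (MM i) (f i))"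
    using product_integral_prod[OF fJ int] unfolding prodeq .
  also have "\<dots> = (if e = e' then (\<sigma> (fst e))^2 else 0)"
  proof (cases "e = e'")
    case True
    then have "(\<Prod>i\<in>J. integral\<^sup>L (MM i) (f i)) = (\<Prod>i\<in>J. if i = e then (\<sigma> (fst e))^2 else 1)"
      by (intro prod.cong) (auto simp: ival)
    then show ?thesis using True fJ e by simp
  next
    case False
    have "integral\<^sup>L (MM e) (f e) = 0" using ival[OF e] False by simp
    then show ?thesis using False fJ e by (simp add: prod_zero_iff) blast
  qed
  finally show "integral\<^sup>L (PiM J MM) (\<lambda>x. x e * x e') = (if e = e' then (\<sigma> (fst e))^2 else 0)" .
qed

lemma nm_meas[measurable]: "(\<lambda>w. norm_mats d \<sigma> w l r c) \<in> borel_measurable (PiM J MM)"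
  unfolding norm_mats_def by measurable

lemma chain_meas[measurable]: "(\<lambda>w. mat_chain (norm_mats d \<sigma> w) d i k r c) \<in> borel_measurable (PiM J MM)"
proof (induction k arbitrary: r c)
  case 0
  then show ?case by simp
next
  case (Suc k)
  note Suc[measurable]
  show ?case unfolding mat_chain.simps mat_mult_def by measurable
qed

lemma prob_PiM: "prob_space (PiM J MM)"
  by (rule prob_space_PiM) (rule MM_prob)

lemma inner:
  assumes l: "1 \<le> l" "l \<le> L"
  shows "(\<integral>\<^sup>+x. ennreal (\<Sum>r<d l. (\<Sum>m<d (l-1). norm_mats d \<sigma> x l r m * u m)\<^sup>2) \<partial>PiM {e\<in>EI. fst e = l} MM)
     = ennreal (\<Sum>m<d (l-1). (u m)\<^sup>2)"
proof -
  define Il where "Il = {e\<in>EI. fst e = l}"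
  define D where "D = sqrt (real (d l)) * \<sigma> l"
  have sl: "\<sigma> l > 0" using \<sigma>pos l by auto
  have dl: "d l > 0" using dpos l by auto
  have D2: "D^2 = real (d l) * (\<sigma> l)^2" unfolding D_def by (simp add: power_mult_distrib)
  have IlEI: "Il \<subseteq> EI" unfolding Il_def by auto
  have inIl: "(l, r, m) \<in> Il" if "r < d l" "m < d (l-1)" for r m
    using that l unfolding Il_def EI_def entry_idx_def by auto
  define cc where "cc m m' = u m * u m' / D^2" for m m'
  define g where "g x = (\<Sum>r<d l. \<Sum>m<d (l-1). \<Sum>m'<d (l-1). cc m m' * (x (l,r,m) * x (l,r,m')))" for x
  have geq: "(\<Sum>r<d l. (\<Sum>m<d (l-1). norm_mats d \<sigma> x l r m * u m)\<^sup>2) = g x" for x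
    unfolding g_def cc_def norm_mats_def D_def[symmetric] power2_eq_square sum_product
    by (intro sum.cong refl) (simp add: mult_ac)
  have t: "integrable (PiM Il MM) (\<lambda>x. cc m m' * (x (l,r,m) * x (l,r,m')))"
    if "r < d l" "m < d (l-1)" "m' < d (l-1)" for r m m'
    using moment(1)[OF IlEI inIl inIl, OF that(1,2) that(1,3)] by (rule integrable_mult_right)
  have is2: "integrable (PiM Il MM) (\<lambda>x. \<Sum>m'<d (l-1). cc m m' * (x (l,r,m) * x (l,r,m')))"
    if "r < d l" "m < d (l-1)" for r m
    by (rule Bochner_Integration.integrable_sum) (use that t in auto)
  have is1: "integrable (PiM Il MM) (\<lambda>x. \<Sum>m<d (l-1). \<Sum>m'<d (l-1). cc m m' * (x (l,r,m) * x (l,r,m')))"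
    if "r < d l" for r
    by (rule Bochner_Integration.integrable_sum) (use that is2 in auto)
  have int: "integrable (PiM Il MM) g"
    unfolding g_def by (rule Bochner_Integration.integrable_sum) (use is1 in auto)
  have mom2: "integral\<^sup>L (PiM Il MM) (\<lambda>x. x (l,r,m) * x (l,r,m')) = (if m = m' then (\<sigma> l)^2 else 0)"
    if "r < d l" "m < d (l-1)" "m' < d (l-1)" for r m m'
    using moment(2)[OF IlEI inIl inIl, OF that(1,2) that(1,3)] by simp
  have "integral\<^sup>L (PiM Il MM) g = (\<Sum>r<d l. \<Sum>m<d (l-1). \<Sum>m'<d (l-1). cc m m' * (if m = m' then (\<sigma> l)^2 else 0))"
    unfolding g_def
    apply (subst Bochner_Integration.integral_sum)
     apply (rule is1, simp)
    apply (intro sum.cong refl)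
    apply (subst Bochner_Integration.integral_sum)
     apply (rule is2, simp, simp)
    apply (intro sum.cong refl)
    apply (subst Bochner_Integration.integral_sum)
     apply (rule t, simp, simp, simp)
    apply (intro sum.cong refl)
    apply (subst integral_mult_right_zero)
    apply (subst mom2)
    by auto
  also have "\<dots> = (\<Sum>r<d l. \<Sum>m<d (l-1). (u m)^2 / D^2 * (\<sigma> l)^2)"
  proof -
    have hh: "cc m m' * (if m = m' then (\<sigma> l)^2 else 0) = (if m = m' then cc m m * (\<sigma> l)^2 else 0)" for m m'
      by simp
    show ?thesis unfolding hh by (intro sum.cong refl) (simp add: cc_def power2_eq_square)
  qed
  also have "\<dots> = real (d l) * (\<Sum>m<d (l-1). (u m)^2 / D^2 * (\<sigma> l)^2)"
    by simp
  also have "\<dots> = (\<Sum>m<d (l-1). (u m)^2)"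
    unfolding sum_distrib_left by (intro sum.cong refl) (use D2 sl dl in \<open>simp add: field_simps\<close>)
  finally have ig: "integral\<^sup>L (PiM Il MM) g = (\<Sum>m<d (l-1). (u m)^2)" .
  have "AE x in PiM Il MM. 0 \<le> g x"
    unfolding geq[symmetric] by (intro AE_I2 sum_nonneg) simp
  then have "(\<integral>\<^sup>+x. ennreal (g x) \<partial>PiM Il MM) = ennreal (integral\<^sup>L (PiM Il MM) g)"
    using int by (rule nn_integral_eq_integral[rotated])
  then show ?thesis unfolding geq Il_def[symmetric] ig .
qed


lemma step:
  assumes l: "1 \<le> l" "l \<le> L"
  and Vm: "\<And>m. (\<lambda>w. V w m) \<in> borel_measurable (PiM EI MM)"
  and Vloc: "\<And>w w' m. (\<And>e. e \<in> EI \<Longrightarrow> fst e \<noteq> l \<Longrightarrow> w e = w' e) \<Longrightarrow> m < d (l-1) \<Longrightarrow> V w m = V w' m"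
  shows "(\<integral>\<^sup>+w. ennreal (\<Sum>r<d l. (\<Sum>m<d (l-1). norm_mats d \<sigma> w l r m * V w m)\<^sup>2) \<partial>PiM EI MM)
       = (\<integral>\<^sup>+w. ennreal (\<Sum>m<d (l-1). (V w m)\<^sup>2) \<partial>PiM EI MM)"
proof -
  define Il where "Il = {e\<in>EI. fst e = l}"
  define Jl where "Jl = {e\<in>EI. fst e \<noteq> l}"
  have EIu: "EI = Jl \<union> Il" unfolding Il_def Jl_def by auto
  have disj: "Jl \<inter> Il = {}" unfolding Il_def Jl_def by auto
  have finJ: "finite Jl" "finite Il" unfolding Il_def Jl_def by auto
  note Vm[measurable]
  have Gm: "(\<lambda>w. ennreal (\<Sum>m<d (l-1). (V w m)\<^sup>2)) \<in> borel_measurable (PiM EI MM)"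
    by (intro measurable_compose[OF _ measurable_ennreal] borel_measurable_sum borel_measurable_power Vm)
  have fold: "integral\<^sup>N (PiM EI MM) f = (\<integral>\<^sup>+y. (\<integral>\<^sup>+x. f (merge Jl Il (y,x)) \<partial>PiM Il MM) \<partial>PiM Jl MM)"
    if "f \<in> borel_measurable (PiM EI MM)" for f
    using product_nn_integral_fold[OF disj finJ, of f] that unfolding EIu[symmetric] by simp
  have loc: "V (merge Jl Il (y,x)) m = V y m" if "m < d (l-1)" for y x m
  proof (rule Vloc[OF _ that])
    fix e assume "e \<in> EI" "fst e \<noteq> l"
    then have "e \<in> Jl" unfolding Jl_def by auto
    then show "merge Jl Il (y,x) e = y e" using disj by simp
  qed
  have nm: "norm_mats d \<sigma> (merge Jl Il (y,x)) l r m = norm_mats d \<sigma> x l r m"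
    if "r < d l" "m < d (l-1)" for y x r m
  proof -
    have "(l, r, m) \<in> Il" using that l unfolding Il_def EI_def entry_idx_def by auto
    then have "merge Jl Il (y,x) (l,r,m) = x (l,r,m)" using disj by simp
    then show ?thesis unfolding norm_mats_def by simp
  qed
  have "(\<integral>\<^sup>+w. ennreal (\<Sum>r<d l. (\<Sum>m<d (l-1). norm_mats d \<sigma> w l r m * V w m)\<^sup>2) \<partial>PiM EI MM)
     = (\<integral>\<^sup>+y. (\<integral>\<^sup>+x. ennreal (\<Sum>r<d l. (\<Sum>m<d (l-1). norm_mats d \<sigma> x l r m * V y m)\<^sup>2) \<partial>PiM Il MM) \<partial>PiM Jl MM)"
    by (subst fold) (measurable, intro nn_integral_cong arg_cong[where f=ennreal] sum.cong refl arg_cong[where f="\<lambda>z. z^2"], simp add: nm loc)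
  also have "\<dots> = (\<integral>\<^sup>+y. ennreal (\<Sum>m<d (l-1). (V y m)\<^sup>2) \<partial>PiM Jl MM)"
    unfolding Il_def by (intro nn_integral_cong inner l)
  also have "\<dots> = (\<integral>\<^sup>+y. (\<integral>\<^sup>+x. ennreal (\<Sum>m<d (l-1). (V (merge Jl Il (y,x)) m)\<^sup>2) \<partial>PiM Il MM) \<partial>PiM Jl MM)"
  proof (intro nn_integral_cong)
    fix y
    have "(\<integral>\<^sup>+x. ennreal (\<Sum>m<d (l-1). (V (merge Jl Il (y,x)) m)\<^sup>2) \<partial>PiM Il MM)
        = (\<integral>\<^sup>+x. ennreal (\<Sum>m<d (l-1). (V y m)\<^sup>2) \<partial>PiM Il MM)"
      by (intro nn_integral_cong arg_cong[where f=ennreal] sum.cong refl) (simp add: loc)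
    also have "\<dots> = ennreal (\<Sum>m<d (l-1). (V y m)\<^sup>2)"
      using prob_space.emeasure_space_1[OF prob_PiM] by (simp add: nn_integral_const)
    finally show "ennreal (\<Sum>m<d (l-1). (V y m)\<^sup>2) = (\<integral>\<^sup>+x. ennreal (\<Sum>m<d (l-1). (V (merge Jl Il (y,x)) m)\<^sup>2) \<partial>PiM Il MM)" by simp
  qed
  also have "\<dots> = (\<integral>\<^sup>+w. ennreal (\<Sum>m<d (l-1). (V w m)\<^sup>2) \<partial>PiM EI MM)"
    by (subst fold[OF Gm]) simp
  finally show ?thesis .
qed

lemma chain_local:
  assumes "1 \<le> i" "i + k \<le> L"
    and ag: "\<And>e. e \<in> EI \<Longrightarrow> i \<le> fst e \<Longrightarrow> fst e \<le> i + k \<Longrightarrow> w e = w' e"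
    and "r < d (i+k)" "c < d (i-1)"
  shows "mat_chain (norm_mats d \<sigma> w) d i k r c = mat_chain (norm_mats d \<sigma> w') d i k r c"
  using assms
proof (induction k arbitrary: r)
  case 0
  have "(i, r, c) \<in> EI" using 0 unfolding EI_def entry_idx_def by auto
  then show ?case using 0 by (simp add: norm_mats_def)
next
  case (Suc k)
  have IH: "mat_chain (norm_mats d \<sigma> w) d i k m c = mat_chain (norm_mats d \<sigma> w') d i k m c"
    if "m < d (i+k)" for m
    using Suc.prems that by (intro Suc.IH) auto
  have E: "norm_mats d \<sigma> w (Suc (i + k)) r m = norm_mats d \<sigma> w' (Suc (i + k)) r m" if "m < d (i+k)" for m
  proof -
    have "(Suc (i + k), r, m) \<in> EI" using Suc.prems that unfolding EI_def entry_idx_def by auto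
    then show ?thesis using Suc.prems by (simp add: norm_mats_def)
  qed
  show ?case unfolding mat_chain.simps mat_mult_def
    by (intro sum.cong refl) (simp add: IH E)
qed

lemma chain_exp:
  assumes "1 \<le> i" "i + k \<le> L" "c < d (i-1)"
  shows "(\<integral>\<^sup>+w. ennreal (\<Sum>r<d (i+k). (mat_chain (norm_mats d \<sigma> w) d i k r c)\<^sup>2) \<partial>PiM EI MM) = 1"
  using assms
proof (induction k)
  case 0
  have "(\<integral>\<^sup>+w. ennreal (\<Sum>r<d i. (\<Sum>m<d (i-1). norm_mats d \<sigma> w i r m * (if m = c then 1 else 0))\<^sup>2) \<partial>PiM EI MM)
       = (\<integral>\<^sup>+w. ennreal (\<Sum>m<d (i-1). (if m = c then 1 else 0 :: real)\<^sup>2) \<partial>PiM EI MM)"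
    using 0 by (intro step) auto
  also have "\<dots> = 1"
  proof -
    have sq: "(if m = c then 1 else 0 :: real)^2 = (if m = c then 1 else 0)" for m by simp
    show ?thesis
      using 0 prob_space.emeasure_space_1[OF prob_PiM] by (simp add: sq nn_integral_const)
  qed
  moreover have "(\<Sum>m<d (i-1). norm_mats d \<sigma> w i r m * (if m = c then 1 else 0)) = norm_mats d \<sigma> w i r c" for w r
  proof -
    have "norm_mats d \<sigma> w i r m * (if m = c then 1 else 0) = (if m = c then norm_mats d \<sigma> w i r m else 0)" for m
      by simp
    then show ?thesis using 0 by simp
  qed
  ultimately show ?case by simp
next
  case (Suc k)
  have "(\<integral>\<^sup>+w. ennreal (\<Sum>r<d (i + Suc k). (\<Sum>m<d (i + Suc k - 1). norm_mats d \<sigma> w (i + Suc k) r m * mat_chain (norm_mats d \<sigma> w) d i k m c)\<^sup>2) \<partial>PiM EI MM)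
       = (\<integral>\<^sup>+w. ennreal (\<Sum>m<d (i + Suc k - 1). (mat_chain (norm_mats d \<sigma> w) d i k m c)\<^sup>2) \<partial>PiM EI MM)"
  proof (rule step)
    show "1 \<le> i + Suc k" "i + Suc k \<le> L" using Suc.prems by auto
    show "(\<lambda>w. mat_chain (norm_mats d \<sigma> w) d i k m c) \<in> borel_measurable (PiM EI MM)" for m
      by measurable
    show "mat_chain (norm_mats d \<sigma> w) d i k m c = mat_chain (norm_mats d \<sigma> w') d i k m c"
      if "\<And>e. e \<in> EI \<Longrightarrow> fst e \<noteq> i + Suc k \<Longrightarrow> w e = w' e" "m < d (i + Suc k - 1)" for w w' m
      using Suc.prems that by (intro chain_local) auto
  qed
  also have "\<dots> = 1" using Suc by simp
  finally show ?case by (simp add: mat_mult_def)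
qed

lemma frob_exp:
  assumes "1 \<le> i" "i \<le> j" "j \<le> L"
  shows "(\<integral>\<^sup>+w. ennreal (\<Sum>r<d j. \<Sum>c<d (i-1). (mat_prod (norm_mats d \<sigma> w) d j i r c)\<^sup>2) \<partial>PiM EI MM) = real (d (i-1))"
proof -
  have j: "j = i + (j - i)" using assms by simp
  have "(\<integral>\<^sup>+w. ennreal (\<Sum>r<d j. \<Sum>c<d (i-1). (mat_prod (norm_mats d \<sigma> w) d j i r c)\<^sup>2) \<partial>PiM EI MM)
      = (\<integral>\<^sup>+w. (\<Sum>c<d (i-1). ennreal (\<Sum>r<d (i + (j-i)). (mat_chain (norm_mats d \<sigma> w) d i (j-i) r c)\<^sup>2)) \<partial>PiM EI MM)"
    unfolding mat_prod_def
    by (intro nn_integral_cong, subst sum.swap, subst j[symmetric], subst sum_ennreal[symmetric]) (auto intro: sum_nonneg)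
  also have "\<dots> = (\<Sum>c<d (i-1). (\<integral>\<^sup>+w. ennreal (\<Sum>r<d (i + (j-i)). (mat_chain (norm_mats d \<sigma> w) d i (j-i) r c)\<^sup>2) \<partial>PiM EI MM))"
    by (rule nn_integral_sum) measurable
  also have "\<dots> = (\<Sum>c<d (i-1). 1)"
    using assms by (intro sum.cong refl chain_exp) auto
  finally show ?thesis by (simp add: ennreal_of_nat_eq_real_of_nat)
qed


lemma prod_meas[measurable]: "(\<lambda>w. mat_prod (norm_mats d \<sigma> w) d j i r c) \<in> borel_measurable (PiM J MM)"
  unfolding mat_prod_def by measurable

lemma main:
  assumes K: "K \<ge> 1" and L1: "L \<ge> 1" and dK: "\<And>l. l \<le> L \<Longrightarrow> real (d l) \<le> K * real L"
    and \<delta>: "0 < \<delta>" "\<delta> < 1"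
  shows "measure (PiM EI MM) {w \<in> space (PiM EI MM). \<forall>i j. 1 \<le> i \<and> i \<le> j \<and> j \<le> L \<longrightarrow>
                  spec_norm (d j) (d (i - 1)) (mat_prod (norm_mats d \<sigma> w) d j i) \<le> K * real L ^ 3 / \<delta>} \<ge> 1 - \<delta>"
proof -
  define M where "M = PiM EI MM"
  interpret P: prob_space M unfolding M_def by (rule prob_PiM)
  define B where "B = K * real L ^ 3 / \<delta>"
  have Lr: "real L \<ge> 1" using L1 by simp
  have L3: "real L ^ 3 \<ge> 1" using Lr by (simp add: one_le_power)
  have "1 * 1 \<le> K * real L ^ 3" by (rule mult_mono) (use K L3 in auto)
  then have a1: "K * real L ^ 3 \<ge> 1" by simp
  have Bpos: "B > 0" unfolding B_def using a1 \<delta> by simp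
  define F where "F i j w = frob (d j) (d (i-1)) (mat_prod (norm_mats d \<sigma> w) d j i)" for i j w
  have Fm[measurable]: "(\<lambda>w. F i j w) \<in> borel_measurable M" for i j
    unfolding F_def frob_def M_def by measurable
  define Pairs where "Pairs = {p \<in> {1..L} \<times> {1..L}. fst p \<le> snd p}"
  have finP: "finite Pairs" unfolding Pairs_def by simp
  have cardP: "card Pairs \<le> L * L"
  proof -
    have "card Pairs \<le> card ({1..L} \<times> {1..L})" unfolding Pairs_def by (intro card_mono) auto
    then show ?thesis by simp
  qed
  define S where "S = {w \<in> space M. \<forall>i j. 1 \<le> i \<and> i \<le> j \<and> j \<le> L \<longrightarrow>
                  spec_norm (d j) (d (i - 1)) (mat_prod (norm_mats d \<sigma> w) d j i) \<le> B}"
  define T where "T = {w \<in> space M. \<forall>p\<in>Pairs. F (fst p) (snd p) w \<le> B^2}"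
  have S_alt: "S = {w \<in> space M. \<forall>p\<in>Pairs. \<forall>xs::rat list.
      Qf (d (snd p)) (d (fst p - 1)) (mat_prod (norm_mats d \<sigma> w) d (snd p) (fst p)) (\<lambda>c. of_rat (xs ! c))
        \<le> B^2 * nxf (d (fst p - 1)) (\<lambda>c. of_rat (xs ! c))}"
    unfolding S_def Pairs_def
    using spec_char[OF less_imp_le[OF Bpos]] rat_dense_char by auto
  have S_sets: "S \<in> sets M"
    unfolding S_alt
  proof (rule sets.sets_Collect_finite_All[OF _ finP])
    fix p :: "nat \<times> nat"
    show "{w \<in> space M. \<forall>xs::rat list.
      Qf (d (snd p)) (d (fst p - 1)) (mat_prod (norm_mats d \<sigma> w) d (snd p) (fst p)) (\<lambda>c. of_rat (xs ! c))
        \<le> B^2 * nxf (d (fst p - 1)) (\<lambda>c. of_rat (xs ! c))} \<in> sets M"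
      unfolding Qf_def M_def by measurable
  qed
  have T_sets: "T \<in> sets M"
    unfolding T_def by (rule sets.sets_Collect_finite_All[OF _ finP]) measurable
  have TS: "T \<subseteq> S"
  proof
    fix w assume w: "w \<in> T"
    have "spec_norm (d j) (d (i - 1)) (mat_prod (norm_mats d \<sigma> w) d j i) \<le> B"
      if "1 \<le> i" "i \<le> j" "j \<le> L" for i j
    proof -
      have "(i, j) \<in> Pairs" unfolding Pairs_def using that by auto
      then have "F i j w \<le> B^2" using w unfolding T_def by auto
      then have "sqrt (F i j w) \<le> sqrt (B^2)" by (rule real_sqrt_le_mono)
      then have "sqrt (F i j w) \<le> B" using Bpos by simp
      then show ?thesis using spec_le_frob order_trans unfolding F_def by blast
    qed
    then show "w \<in> S" using w unfolding S_def T_def by auto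
  qed
  have each: "measure M {w \<in> space M. F i j w \<ge> B^2} \<le> real (d (i-1)) / B^2"
    if "(i, j) \<in> Pairs" for i j
  proof -
    have ij: "1 \<le> i" "i \<le> j" "j \<le> L" using that unfolding Pairs_def by auto
    have nn: "AE w in M. 0 \<le> F i j w" unfolding F_def by (simp add: frob_nonneg)
    have fe: "(\<integral>\<^sup>+w. ennreal (F i j w) \<partial>M) = ennreal (real (d (i-1)))"
      unfolding F_def frob_def M_def by (rule frob_exp[OF ij])
    have int: "integrable M (F i j)"
      by (rule integrableI_nn_integral_finite[OF _ nn fe]) simp
    have ie: "integral\<^sup>L M (F i j) = real (d (i-1))"
      by (subst integral_eq_nn_integral) (use nn fe in auto)
    have "measure M {w \<in> space M. F i j w \<ge> B^2} \<le> integral\<^sup>L M (F i j) / B^2"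
      by (rule integral_Markov_inequality_measure[OF int sets.top nn]) (use Bpos in simp)
    then show ?thesis unfolding ie .
  qed
  have "space M - T \<subseteq> (\<Union>p\<in>Pairs. {w \<in> space M. F (fst p) (snd p) w \<ge> B^2})"
    unfolding T_def by auto
  then have "measure M (space M - T) \<le> measure M (\<Union>p\<in>Pairs. {w \<in> space M. F (fst p) (snd p) w \<ge> B^2})"
    by (intro P.finite_measure_mono) (auto intro!: sets.countable_UN' finP intro: countable_finite)
  also have "\<dots> \<le> (\<Sum>p\<in>Pairs. measure M {w \<in> space M. F (fst p) (snd p) w \<ge> B^2})"
    by (rule measure_UNION_le[OF finP]) measurable
  also have "\<dots> \<le> (\<Sum>p\<in>Pairs. K * real L / B^2)"
  proof (rule sum_mono)
    fix p assume p: "p \<in> Pairs"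
    obtain i j where pij: "p = (i, j)" by fastforce
    have "measure M {w \<in> space M. F i j w \<ge> B^2} \<le> real (d (i-1)) / B^2"
      using each p pij by auto
    also have "\<dots> \<le> K * real L / B^2"
      using dK[of "i-1"] p pij Bpos unfolding Pairs_def by (auto intro!: divide_right_mono)
    finally show "measure M {w \<in> space M. F (fst p) (snd p) w \<ge> B^2} \<le> K * real L / B^2"
      using pij by simp
  qed
  also have "\<dots> = real (card Pairs) * (K * real L / B^2)" by simp
  also have "\<dots> \<le> real (L * L) * (K * real L / B^2)"
  proof (rule mult_right_mono)
    show "real (card Pairs) \<le> real (L * L)" using cardP by (simp only: of_nat_le_iff)
    show "0 \<le> K * real L / B^2" using K Bpos by simp
  qed
  also have "\<dots> \<le> \<delta>"
  proof -
    define a where "a = K * real L ^ 3"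
    have a1': "a \<ge> 1" using a1 unfolding a_def .
    have Ba: "B = a / \<delta>" unfolding B_def a_def ..
    have "real (L * L) * (K * real L / B^2) = a / B^2" unfolding a_def by (simp add: power3_eq_cube)
    also have "\<dots> = \<delta>^2 / a" unfolding Ba using a1' \<delta>
      by (simp add: power2_eq_square field_simps)
    also have "\<dots> \<le> \<delta>^2" using a1' \<delta> by (simp add: divide_le_eq mult_le_cancel_left1)
    also have "\<dots> \<le> \<delta>" using \<delta> by (simp add: power2_eq_square mult_le_cancel_left1)
    finally show ?thesis .
  qed
  finally have c: "measure M (space M - T) \<le> \<delta>" .
  have "measure M T = 1 - measure M (space M - T)"
    using P.prob_compl[OF T_sets] by simp
  then have "measure M T \<ge> 1 - \<delta>" using c by simp
  moreover have "measure M T \<le> measure M S" by (rule P.finite_measure_mono[OF TS S_sets])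
  ultimately show ?thesis unfolding S_def B_def M_def by simp
qed

end

lemma lemma5p1_aux:
  fixes K :: real
  assumes K: "K \<ge> 1"
  and H: "0 < \<gamma> \<and> \<gamma> \<le> 1 \<and> L \<ge> 1 \<and> (\<forall>l\<le>L. d l > 0)
           \<and> (\<forall>l\<le>L. real (d l) \<le> K * real L powr (1 - \<gamma>))
           \<and> (\<forall>l\<in>{1..L}. \<sigma> l > 0) \<and> 0 < \<delta> \<and> \<delta> < 1"
  shows "measure (gauss_model L d \<sigma>)
               {w \<in> space (gauss_model L d \<sigma>). \<forall>i j. 1 \<le> i \<and> i \<le> j \<and> j \<le> L \<longrightarrow>
                  spec_norm (d j) (d (i - 1)) (mat_prod (norm_mats d \<sigma> w) d j i)
                    \<le> K * real L ^ 3 / \<delta>}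
             \<ge> 1 - \<delta>"
proof -
  from H have g: "0 < \<gamma>" "\<gamma> \<le> 1" and L1: "L \<ge> 1" and dp: "\<forall>l\<le>L. d l > 0"
    and dK0: "\<forall>l\<le>L. real (d l) \<le> K * real L powr (1 - \<gamma>)" and sp: "\<forall>l\<in>{1..L}. \<sigma> l > 0"
    and \<delta>: "0 < \<delta>" "\<delta> < 1" by auto
  interpret gsetup L d \<sigma> by unfold_locales (use sp dp in auto)
  have dK: "real (d l) \<le> K * real L" if "l \<le> L" for l
  proof -
    have "real L powr (1 - \<gamma>) \<le> real L powr 1" using L1 g by (intro powr_mono) auto
    also have "\<dots> = real L" using L1 by simp
    finally have "K * real L powr (1 - \<gamma>) \<le> K * real L" using K by (intro mult_left_mono) auto
    then show ?thesis using dK0 that by fastforce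
  qed
  show ?thesis unfolding gm using main[OF K L1 dK \<delta>] by simp
qed

theorem lemma5p1:
  fixes K :: real
  assumes "K \<ge> 1"
  shows "\<exists>C::real. \<forall>(\<gamma>::real) (L::nat) (d::nat \<Rightarrow> nat) (\<sigma>::nat \<Rightarrow> real) (\<delta>::real).
           0 < \<gamma> \<and> \<gamma> \<le> 1 \<and> L \<ge> 1 \<and> (\<forall>l\<le>L. d l > 0)
           \<and> (\<forall>l\<le>L. real (d l) \<le> K * real L powr (1 - \<gamma>))
           \<and> (\<forall>l\<in>{1..L}. \<sigma> l > 0) \<and> 0 < \<delta> \<and> \<delta> < 1
         \<longrightarrow> measure (gauss_model L d \<sigma>)
               {w \<in> space (gauss_model L d \<sigma>). \<forall>i j. 1 \<le> i \<and> i \<le> j \<and> j \<le> L \<longrightarrow>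
                  spec_norm (d j) (d (i - 1)) (mat_prod (norm_mats d \<sigma> w) d j i)
                    \<le> C * real L ^ 3 / \<delta>}
             \<ge> 1 - \<delta>"
  by (intro exI[of _ K] allI impI) (erule lemma5p1_aux[OF assms])

end
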